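(* Let $F$ be an arbitrary formal group law over $R$. For every $w\in W$ and every reduced word $I_w=(i_1,\dots,i_l)$ of $w$ we have in $Q_W$ $$\mathrm{ev}(\mathcal R^X_{I_w})=\delta_w,\qquad \mathrm{ev}(\mathcal R^Y_{I_w})=\theta_{I_w}\,\delta_w,$$ where $\theta_{I_w}:=\prod_{k=1}^{l}\theta(\beta_k)$ and $\theta(\lambda):=-\frac{x_{-\lambda}}{x_\lambda}$. Moreover $\theta_{I_w}$ depends only on $w$ and not on the choice of the reduced word $I_w$.
   Context: Let $R$ be a commutative ring and $F(x,y)\in R[[x,y]]$ a one-dimensional commutative formal group law over $R$. Let $\Phi$ be a finite (crystallographic, reduced) root system with weight lattice $\Lambda$, positive roots $\Phi^+$, negative roots $\Phi^-=-\Phi^+$, simple roots $\alpha_1,\dots,\alpha_n$, simple coroots $\alpha_i^\vee$, simple reflections $s_1,\dots,s_n$, Weyl group $W$ with length function $\ell$, Bruhat order $\le$ and longest element $w_\circ$; $m_{ij}$ denotes the order of $s_is_j$. The formal group algebra is $S=R[[y_\lambda]]_{\lambda\in\Lambda}/(y_0,\;y_{\lambda+\nu}-F(y_\lambda,y_\nu))$, on which $W$ acts by $w(y_\lambda)=y_{w\lambda}$. Whenever only one copy of $S$ is involved its generators are also written $x_\lambda:=y_\lambda$. Let $Q$ be the localization of $S$ at all $x_\alpha$, $\alpha\in\Phi$, and let $Q_W=Q\otimes_R R[W]$ be the twisted group algebra, a free left $Q$-module with basis $\{\delta_w\}_{w\in W}$ and multiplication $q\delta_w\cdot q'\delta_{w'}=q\,w(q')\,\delta_{ww'}$.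 Write $\delta_i=\delta_{s_i}$ and $x_{\pm i}=x_{\pm\alpha_i}$, and define the Demazure and push-pull elements $X_i=\frac{1}{x_i}(\delta_i-1)$ and $Y_i=\frac{1}{x_{-i}}+\frac{1}{x_i}\delta_i$ of $Q_W$. For a sequence $I=(i_1,\dots,i_l)$ set $X_I=X_{i_1}\cdots X_{i_l}$ and $Y_I=Y_{i_1}\cdots Y_{i_l}$. Let $Q_W[[\Lambda]]_F:=S\otimes_R Q_W$, where the generators of the left factor $S$ are written $y_\lambda$ and commute with all of $Q_W$ (whose coefficients are written in the variables $x_\lambda$); it is a left module over $S\otimes_R Q$. For $i\in\{1,\dots,n\}$ and $\lambda\in\Lambda$ set $h_i^Y(\lambda)=1-y_\lambda Y_i$ and $h_i^X(\lambda)=1+y_{-\lambda}X_i$. For $w\in W$ and a reduced word $I_w=(i_1,\dots,i_l)$ of $w$ (so $w=s_{i_1}\cdots s_{i_l}$, $l=\ell(w)$) let $\beta_k=s_{i_1}\cdots s_{i_{k-1}}\alpha_{i_k}$, $k=1,\dots,l$ (these are the elements of $\Phi^+\cap w\Phi^-$), and define the formal root polynomials $\mathcal R^Y_{I_w}=h^Y_{i_1}(\beta_1)h^Y_{i_2}(\beta_2)\cdots h^Y_{i_l}(\beta_l)$ and $\mathcal R^X_{I_w}=h^X_{i_1}(\beta_1)\cdots h^X_{i_l}(\beta_l)$ (products in this order). The evaluation map $\mathrm{ev}$ is the ring homomorphism $S\otimes_R Q\to Q$ with $y_\lambda\otimes 1\mapsto x_{-\lambda}$ and identity on $Q$, extended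 to the homomorphism of left $S\otimes_R Q$-modules $\mathrm{ev}:Q_W[[\Lambda]]_F\to Q_W$ (which fixes each element of $Q_W$ and sends $y_\lambda$ to $x_{-\lambda}$). *)

theory Defs
  imports "HOL-Analysis.Analysis" "HOL-Library.Multiset"
begin

definition refl :: "'v::euclidean_space \<Rightarrow> 'v \<Rightarrow> 'v" where
  "refl a v = v - (2 * (v \<bullet> a) / (a \<bullet> a)) *\<^sub>R a"

definition root_system :: "'v::euclidean_space set \<Rightarrow> bool" where
  "root_system Phi \<longleftrightarrow> finite Phi \<and> 0 \<notin> Phi \<and> span Phi = UNIV
     \<and> (\<forall>a\<in>Phi. \<forall>b\<in>Phi. refl a b \<in> Phi)
     \<and> (\<forall>a\<in>Phi. \<forall>b\<in>Phi. 2 * (b \<bullet> a) / (a \<bullet> a) \<in> \<int>)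
     \<and> (\<forall>a\<in>Phi. \<forall>c::real. c *\<^sub>R a \<in> Phi \<longrightarrow> c = 1 \<or> c = -1)"

definition simple_roots :: "'v::euclidean_space set \<Rightarrow> nat \<Rightarrow> (nat \<Rightarrow> 'v) \<Rightarrow> bool" where
  "simple_roots Phi n alpha \<longleftrightarrow> (\<forall>i<n. alpha i \<in> Phi) \<and> inj_on alpha {..<n}
     \<and> independent (alpha ` {..<n})
     \<and> (\<forall>b\<in>Phi. \<exists>c::nat \<Rightarrow> int. b = (\<Sum>i<n. of_int (c i) *\<^sub>R alpha i)
            \<and> ((\<forall>i<n. c i \<ge> 0) \<or> (\<forall>i<n. c i \<le> 0)))"

inductive_set weyl_group :: "'v::euclidean_space set \<Rightarrow> ('v \<Rightarrow> 'v) set" for Phi where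
  id_in: "id \<in> weyl_group Phi"
| refl_in: "a \<in> Phi \<Longrightarrow> w \<in> weyl_group Phi \<Longrightarrow> refl a \<circ> w \<in> weyl_group Phi"

definition weight_lattice :: "nat \<Rightarrow> (nat \<Rightarrow> 'v::euclidean_space) \<Rightarrow> 'v set" where
  "weight_lattice n alpha = {l. \<forall>i<n. 2 * (l \<bullet> alpha i) / (alpha i \<bullet> alpha i) \<in> \<int>}"

definition word_elt :: "(nat \<Rightarrow> 'v::euclidean_space) \<Rightarrow> nat list \<Rightarrow> 'v \<Rightarrow> 'v" where
  "word_elt alpha I = foldr (\<lambda>i f. refl (alpha i) \<circ> f) I id"

definition reduced_word :: "nat \<Rightarrow> (nat \<Rightarrow> 'v::euclidean_space) \<Rightarrow> ('v \<Rightarrow> 'v) \<Rightarrow> nat list \<Rightarrow> bool" where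
  "reduced_word n alpha w I \<longleftrightarrow> set I \<subseteq> {..<n} \<and> word_elt alpha I = w
     \<and> (\<forall>J. set J \<subseteq> {..<n} \<and> word_elt alpha J = w \<longrightarrow> length I \<le> length J)"

text \<open>beta_{k+1} = s_{i_1} ... s_{i_k} alpha_{i_{k+1}} (0-indexed k).\<close>
definition beta :: "(nat \<Rightarrow> 'v::euclidean_space) \<Rightarrow> nat list \<Rightarrow> nat \<Rightarrow> 'v" where
  "beta alpha I k = word_elt alpha (take k I) (alpha (I ! k))"

definition uinv :: "'q::comm_ring_1 \<Rightarrow> 'q" where
  "uinv a = (SOME b. a * b = 1)"

definition weyl_action :: "'v::euclidean_space set \<Rightarrow> (('v \<Rightarrow> 'v) \<Rightarrow> 'q::comm_ring_1 \<Rightarrow> 'q) \<Rightarrow> bool" where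
  "weyl_action Phi act \<longleftrightarrow> act id = id
     \<and> (\<forall>w\<in>weyl_group Phi. \<forall>v\<in>weyl_group Phi. act (w \<circ> v) = act w \<circ> act v)
     \<and> (\<forall>w\<in>weyl_group Phi. bij (act w) \<and> act w 1 = 1
          \<and> (\<forall>a b. act w (a + b) = act w a + act w b \<and> act w (a * b) = act w a * act w b))"

definition admissible_x :: "'v::euclidean_space set \<Rightarrow> nat \<Rightarrow> (nat \<Rightarrow> 'v)
     \<Rightarrow> (('v \<Rightarrow> 'v) \<Rightarrow> 'q::comm_ring_1 \<Rightarrow> 'q) \<Rightarrow> ('v \<Rightarrow> 'q) \<Rightarrow> bool" where
  "admissible_x Phi n alpha act x \<longleftrightarrow>
     (\<forall>w\<in>weyl_group Phi. \<forall>l\<in>weight_lattice n alpha. act w (x l) = x (w l))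
     \<and> (\<forall>a\<in>Phi. \<exists>b. x a * b = 1)"

definition theta :: "('v \<Rightarrow> 'q::comm_ring_1) \<Rightarrow> 'v::uminus \<Rightarrow> 'q" where
  "theta x l = - (x (- l) * uinv (x l))"

definition theta_word :: "('v::euclidean_space \<Rightarrow> 'q::comm_ring_1) \<Rightarrow> (nat \<Rightarrow> 'v) \<Rightarrow> nat list \<Rightarrow> 'q" where
  "theta_word x alpha I = (\<Prod>k<length I. theta x (beta alpha I k))"

text \<open>An element sum_w q_w delta_w of Q_W is represented by the coefficient function w \<mapsto> q_w
  (zero outside W).\<close>
type_synonym ('v, 'q) qw = "('v \<Rightarrow> 'v) \<Rightarrow> 'q"

definition delta :: "('v \<Rightarrow> 'v) \<Rightarrow> ('v, 'q::comm_ring_1) qw" where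
  "delta w = (\<lambda>u. if u = w then 1 else 0)"

definition scal :: "'q::comm_ring_1 \<Rightarrow> ('v, 'q) qw \<Rightarrow> ('v, 'q) qw" where
  "scal q f = (\<lambda>u. q * f u)"

definition qw_mult :: "'v::euclidean_space set \<Rightarrow> (('v \<Rightarrow> 'v) \<Rightarrow> 'q::comm_ring_1 \<Rightarrow> 'q)
     \<Rightarrow> ('v, 'q) qw \<Rightarrow> ('v, 'q) qw \<Rightarrow> ('v, 'q) qw" where
  "qw_mult Phi act f g = (\<lambda>u. \<Sum>w\<in>weyl_group Phi. \<Sum>v\<in>weyl_group Phi.
       if w \<circ> v = u then f w * act w (g v) else 0)"

definition demX :: "(nat \<Rightarrow> 'v::euclidean_space) \<Rightarrow> ('v \<Rightarrow> 'q::comm_ring_1) \<Rightarrow> nat \<Rightarrow> ('v, 'q) qw" where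
  "demX alpha x i = scal (uinv (x (alpha i))) (\<lambda>u. delta (refl (alpha i)) u - delta id u)"

definition ppY :: "(nat \<Rightarrow> 'v::euclidean_space) \<Rightarrow> ('v \<Rightarrow> 'q::comm_ring_1) \<Rightarrow> nat \<Rightarrow> ('v, 'q) qw" where
  "ppY alpha x i = (\<lambda>u. uinv (x (- alpha i)) * delta id u + uinv (x (alpha i)) * delta (refl (alpha i)) u)"

text \<open>An element is represented as a formal finite sum (list) of pure tensors
  y^m \<otimes> a, where m is a finite multiset of weights (the monomial prod_{mu in m} y_mu)
  and a is in Q_W. The y's commute with everything.\<close>
type_synonym ('v, 'q) qwl = "('v multiset \<times> ('v, 'q) qw) list"

definition tmult :: "'v::euclidean_space set \<Rightarrow> (('v \<Rightarrow> 'v) \<Rightarrow> 'q::comm_ring_1 \<Rightarrow> 'q)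
     \<Rightarrow> ('v, 'q) qwl \<Rightarrow> ('v, 'q) qwl \<Rightarrow> ('v, 'q) qwl" where
  "tmult Phi act A B = [(fst a + fst b, qw_mult Phi act (snd a) (snd b)). a \<leftarrow> A, b \<leftarrow> B]"

definition tprod :: "'v::euclidean_space set \<Rightarrow> (('v \<Rightarrow> 'v) \<Rightarrow> 'q::comm_ring_1 \<Rightarrow> 'q)
     \<Rightarrow> ('v, 'q) qwl list \<Rightarrow> ('v, 'q) qwl" where
  "tprod Phi act As = foldr (tmult Phi act) As [({#}, delta id)]"

text \<open>h^Y_i(l) = 1 - y_l Y_i and h^X_i(l) = 1 + y_{-l} X_i.\<close>
definition hY :: "(nat \<Rightarrow> 'v::euclidean_space) \<Rightarrow> ('v \<Rightarrow> 'q::comm_ring_1) \<Rightarrow> nat \<Rightarrow> 'v \<Rightarrow> ('v, 'q) qwl" where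
  "hY alpha x i l = [({#}, delta id), ({#l#}, (\<lambda>u. - ppY alpha x i u))]"

definition hX :: "(nat \<Rightarrow> 'v::euclidean_space) \<Rightarrow> ('v \<Rightarrow> 'q::comm_ring_1) \<Rightarrow> nat \<Rightarrow> 'v \<Rightarrow> ('v, 'q) qwl" where
  "hX alpha x i l = [({#}, delta id), ({#- l#}, demX alpha x i)]"

definition root_polyY :: "'v::euclidean_space set \<Rightarrow> (nat \<Rightarrow> 'v) \<Rightarrow> (('v \<Rightarrow> 'v) \<Rightarrow> 'q::comm_ring_1 \<Rightarrow> 'q)
     \<Rightarrow> ('v \<Rightarrow> 'q) \<Rightarrow> nat list \<Rightarrow> ('v, 'q) qwl" where
  "root_polyY Phi alpha act x I = tprod Phi act [hY alpha x (I ! k) (beta alpha I k). k \<leftarrow> [0..<length I]]"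

definition root_polyX :: "'v::euclidean_space set \<Rightarrow> (nat \<Rightarrow> 'v) \<Rightarrow> (('v \<Rightarrow> 'v) \<Rightarrow> 'q::comm_ring_1 \<Rightarrow> 'q)
     \<Rightarrow> ('v \<Rightarrow> 'q) \<Rightarrow> nat list \<Rightarrow> ('v, 'q) qwl" where
  "root_polyX Phi alpha act x I = tprod Phi act [hX alpha x (I ! k) (beta alpha I k). k \<leftarrow> [0..<length I]]"

definition ev :: "('v::uminus \<Rightarrow> 'q::comm_ring_1) \<Rightarrow> ('v, 'q) qwl \<Rightarrow> ('v, 'q) qw" where
  "ev x A = (\<lambda>u. \<Sum>p\<leftarrow>A. (\<Prod>mu\<in>#fst p. x (- mu)) * snd p u)"

end

theory Submission
  imports Defs
begin


lemma refl_linear: "linear (refl a)"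
  unfolding refl_def
  by (rule linearI) (auto simp: inner_add_left add_divide_distrib algebra_simps scaleR_add_left inner_scaleR_left)

lemma refl_neg: "refl a (- v) = - refl a v"
  using linear_neg[OF refl_linear] by blast

lemma refl_refl: "a \<noteq> 0 \<Longrightarrow> refl a (refl a v) = v"
  unfolding refl_def
  by (simp add: inner_diff_left inner_scaleR_left algebra_simps)

lemma refl_self: "a \<noteq> 0 \<Longrightarrow> refl a a = - a"
  unfolding refl_def by (simp add: algebra_simps scaleR_2)

lemma refl_inj: "a \<noteq> 0 \<Longrightarrow> inj (refl a)"
  by (metis injI refl_refl)

locale RS =
  fixes Phi :: "'v::euclidean_space set" and n :: nat and alpha :: "nat \<Rightarrow> 'v"
    and act :: "('v \<Rightarrow> 'v) \<Rightarrow> 'q::comm_ring_1 \<Rightarrow> 'q" and x :: "'v \<Rightarrow> 'q"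
  assumes rs: "root_system Phi" and sr: "simple_roots Phi n alpha"
    and wa: "weyl_action Phi act" and ax: "admissible_x Phi n alpha act x"
begin

abbreviation "G \<equiv> weyl_group Phi"

lemma fin: "finite Phi" and nz: "0 \<notin> Phi" and spanU: "span Phi = UNIV"
  and clos: "a \<in> Phi \<Longrightarrow> b \<in> Phi \<Longrightarrow> refl a b \<in> Phi"
  and cryst: "a \<in> Phi \<Longrightarrow> b \<in> Phi \<Longrightarrow> 2 * (b \<bullet> a) / (a \<bullet> a) \<in> \<int>"
  and red: "a \<in> Phi \<Longrightarrow> c *\<^sub>R a \<in> Phi \<Longrightarrow> c = 1 \<or> c = -1"
  using rs unfolding root_system_def by auto

lemma neg_root: "a \<in> Phi \<Longrightarrow> - a \<in> Phi"
  using clos[of a a] refl_self[of a] nz by (cases "a = 0") auto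

lemma refl_image: "a \<in> Phi \<Longrightarrow> refl a ` Phi = Phi"
proof -
  assume a: "a \<in> Phi"
  hence anz: "a \<noteq> 0" using nz by auto
  show ?thesis
  proof
    show "refl a ` Phi \<subseteq> Phi" using clos a by auto
    show "Phi \<subseteq> refl a ` Phi"
    proof
      fix b assume "b \<in> Phi"
      hence "refl a b \<in> Phi" using clos a by auto
      thus "b \<in> refl a ` Phi" using refl_refl[OF anz, of b] by (metis imageI)
    qed
  qed
qed

lemma G_props: "w \<in> G \<Longrightarrow> linear w \<and> inj w \<and> w ` Phi = Phi"
proof (induction rule: weyl_group.induct)
  case id_in thus ?case using linear_id by (simp add: id_def)
next
  case (refl_in a w)
  have anz: "a \<noteq> 0" using refl_in nz by auto
  have l: "linear (refl a \<circ> w)" using linear_compose[of w "refl a"] refl_linear[of a] refl_in by blast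
  have i: "inj (refl a \<circ> w)" using inj_compose[OF refl_inj[OF anz]] refl_in by blast
  have im: "(refl a \<circ> w) ` Phi = Phi" using refl_in refl_image[of a] by (metis image_comp)
  show ?case using l i im by blast
qed

lemma G_comp: "w \<in> G \<Longrightarrow> v \<in> G \<Longrightarrow> w \<circ> v \<in> G"
  by (induction rule: weyl_group.induct) (auto simp: comp_assoc intro: weyl_group.intros)

lemma G_refl: "a \<in> Phi \<Longrightarrow> refl a \<in> G"
  using weyl_group.refl_in[OF _ weyl_group.id_in, of a Phi] by simp

lemma G_finite: "finite G"
proof (rule inj_on_finite[where f="\<lambda>w. restrict w Phi" and B="Phi \<rightarrow>\<^sub>E Phi"])
  show "inj_on (\<lambda>w. restrict w Phi) G"
  proof (rule inj_onI)
    fix w v assume w: "w \<in> G" and v: "v \<in> G" and eq: "restrict w Phi = restrict v Phi"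
    have "\<forall>b\<in>Phi. w b = v b" using eq by (metis restrict_apply')
    moreover have "linear w" "linear v" using G_props w v by auto
    ultimately show "w = v" using linear_eq_on_span[of w v Phi] spanU by auto
  qed
  show "(\<lambda>w. restrict w Phi) ` G \<subseteq> Phi \<rightarrow>\<^sub>E Phi" using G_props by (force simp: PiE_iff)
  show "finite (Phi \<rightarrow>\<^sub>E Phi)" using fin by (simp add: finite_PiE)
qed


lemma simple_in: "i < n \<Longrightarrow> alpha i \<in> Phi" and alpha_inj: "inj_on alpha {..<n}"
  and indep: "independent (alpha ` {..<n})"
  and decomp: "b \<in> Phi \<Longrightarrow> \<exists>c::nat \<Rightarrow> int. b = (\<Sum>i<n. of_int (c i) *\<^sub>R alpha i)
            \<and> ((\<forall>i<n. c i \<ge> 0) \<or> (\<forall>i<n. c i \<le> 0))"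
  using sr unfolding simple_roots_def by auto

lemma coeff_zero:
  assumes "(\<Sum>i<n. r i *\<^sub>R alpha i) = 0" "i < n" shows "r i = 0"
proof -
  define u where "u v = r (the_inv_into {..<n} alpha v)" for v
  have "(\<Sum>v\<in>alpha ` {..<n}. u v *\<^sub>R v) = (\<Sum>i<n. u (alpha i) *\<^sub>R alpha i)"
    by (rule sum.reindex[OF alpha_inj, unfolded comp_def])
  also have "\<dots> = (\<Sum>i<n. r i *\<^sub>R alpha i)"
    by (rule sum.cong) (auto simp: u_def the_inv_into_f_f[OF alpha_inj])
  finally have "(\<Sum>v\<in>alpha ` {..<n}. u v *\<^sub>R v) = 0" using assms by simp
  hence "u (alpha i) = 0" using independentD[OF indep, of "alpha ` {..<n}" u "alpha i"] assms by auto
  thus ?thesis by (simp add: u_def the_inv_into_f_f[OF alpha_inj] assms)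
qed

lemma coeff_unique:
  assumes "(\<Sum>i<n. r i *\<^sub>R alpha i) = (\<Sum>i<n. s i *\<^sub>R alpha i)" "i < n" shows "r i = s i"
proof -
  have "(\<Sum>i<n. (r i - s i) *\<^sub>R alpha i) = 0"
    using assms by (simp add: scaleR_diff_left sum_subtractf)
  from coeff_zero[OF this assms(2)] show ?thesis by simp
qed

definition "Pos = {b\<in>Phi. \<exists>c::nat\<Rightarrow>int. b = (\<Sum>i<n. of_int (c i) *\<^sub>R alpha i) \<and> (\<forall>i<n. c i \<ge> 0)}"
definition "Neg = {b\<in>Phi. \<exists>c::nat\<Rightarrow>int. b = (\<Sum>i<n. of_int (c i) *\<^sub>R alpha i) \<and> (\<forall>i<n. c i \<le> 0)}"

lemma PN_union: "Phi = Pos \<union> Neg"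
  using decomp unfolding Pos_def Neg_def by blast

lemma PN_disj: "b \<in> Pos \<Longrightarrow> b \<in> Neg \<Longrightarrow> False"
proof -
  assume "b \<in> Pos" "b \<in> Neg"
  then obtain c d where b: "b \<in> Phi" and c: "b = (\<Sum>i<n. of_int (c i) *\<^sub>R alpha i)" "\<forall>i<n. c i \<ge> (0::int)"
    and d: "b = (\<Sum>i<n. of_int (d i) *\<^sub>R alpha i)" "\<forall>i<n. d i \<le> (0::int)"
    unfolding Pos_def Neg_def by blast
  have "\<forall>i<n. c i = d i"
  proof (intro allI impI)
    fix i assume "i < n"
    from coeff_unique[of "\<lambda>i. of_int (c i)" "\<lambda>i. of_int (d i)", OF _ this] c d
    show "c i = d i" by simp
  qed
  hence "\<forall>i<n. c i = 0"
  proof (intro allI impI)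
    fix i assume i: "i < n" and e: "\<forall>i<n. c i = d i"
    have "c i = d i" "0 \<le> c i" "d i \<le> 0" using c(2) d(2) e i by auto
    thus "c i = 0" by linarith
  qed
  hence "b = 0" using c by simp
  thus False using b nz by simp
qed

lemma neg_Pos: "b \<in> Pos \<Longrightarrow> - b \<in> Neg"
proof -
  assume "b \<in> Pos"
  then obtain c where b: "b \<in> Phi" and c: "b = (\<Sum>i<n. of_int (c i) *\<^sub>R alpha i)" "\<forall>i<n. c i \<ge> (0::int)"
    unfolding Pos_def by blast
  have "- b = (\<Sum>i<n. of_int (- c i) *\<^sub>R alpha i)" using c by (simp add: sum_negf)
  thus ?thesis using c neg_root[OF b] unfolding Neg_def by (intro CollectI conjI exI[of _ "\<lambda>i. - c i"]) auto
qed

lemma neg_Neg: "b \<in> Neg \<Longrightarrow> - b \<in> Pos"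
proof -
  assume "b \<in> Neg"
  then obtain c where b: "b \<in> Phi" and c: "b = (\<Sum>i<n. of_int (c i) *\<^sub>R alpha i)" "\<forall>i<n. c i \<le> (0::int)"
    unfolding Neg_def by blast
  have "- b = (\<Sum>i<n. of_int (- c i) *\<^sub>R alpha i)" using c by (simp add: sum_negf)
  thus ?thesis using c neg_root[OF b] unfolding Pos_def by (intro CollectI conjI exI[of _ "\<lambda>i. - c i"]) auto
qed

lemma Neg_eq: "Neg = uminus ` Pos"
proof
  show "Neg \<subseteq> uminus ` Pos"
  proof
    fix b assume "b \<in> Neg"
    hence "- b \<in> Pos" by (rule neg_Neg)
    thus "b \<in> uminus ` Pos" by (rule rev_image_eqI) simp
  qed
  show "uminus ` Pos \<subseteq> Neg" using neg_Pos by blast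
qed

lemma alpha_Pos: "i < n \<Longrightarrow> alpha i \<in> Pos"
proof -
  assume i: "i < n"
  have "(\<Sum>j<n. of_int (if j = i then 1 else 0) *\<^sub>R alpha j) = (\<Sum>j<n. if j = i then alpha j else 0)"
    by (rule sum.cong) auto
  also have "\<dots> = alpha i" using i by simp
  finally show ?thesis using i simple_in[OF i] unfolding Pos_def
    by (intro CollectI conjI exI[of _ "\<lambda>j. if j = i then 1 else 0"]) auto
qed

lemma refl_Pos:
  assumes i: "i < n" and b: "b \<in> Pos" and ne: "b \<noteq> alpha i"
  shows "refl (alpha i) b \<in> Pos \<and> refl (alpha i) b \<noteq> alpha i"
proof -
  define a where "a = alpha i"
  have a: "a \<in> Phi" using simple_in[OF i] a_def by simp
  have anz: "a \<noteq> 0" using a nz by auto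
  obtain c where bP: "b \<in> Phi" and c: "b = (\<Sum>j<n. of_int (c j) *\<^sub>R alpha j)" "\<forall>j<n. c j \<ge> (0::int)"
    using b unfolding Pos_def by blast
  obtain K where K: "2 * (b \<bullet> a) / (a \<bullet> a) = of_int K" using cryst[OF a bP] by (blast elim: Ints_cases)
  define sb where "sb = refl a b"
  have sbP: "sb \<in> Phi" using clos[OF a bP] sb_def by simp
  have sbeq: "sb = b - of_int K *\<^sub>R a" unfolding sb_def refl_def K ..
  define c' where "c' j = c j - (if j = i then K else 0)" for j
  have e1: "(\<Sum>j<n. of_int (c' j) *\<^sub>R alpha j) = (\<Sum>j<n. of_int (c j) *\<^sub>R alpha j) - (\<Sum>j<n. if j = i then of_int K *\<^sub>R alpha j else 0)"
    unfolding c'_def sum_subtractf[symmetric] by (rule sum.cong) (auto simp: scaleR_diff_left)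
  have e2: "(\<Sum>j<n. if j = i then of_int K *\<^sub>R alpha j else 0) = of_int K *\<^sub>R alpha i" using i by simp
  have sbc: "sb = (\<Sum>j<n. of_int (c' j) *\<^sub>R alpha j)"
    unfolding e1 e2 using c(1) sbeq a_def by simp
  obtain d where d: "sb = (\<Sum>j<n. of_int (d j) *\<^sub>R alpha j)" "(\<forall>j<n. d j \<ge> 0) \<or> (\<forall>j<n. d j \<le> 0)"
    using decomp[OF sbP] by blast
  have dc: "\<forall>j<n. d j = c' j"
  proof (intro allI impI)
    fix j assume "j < n"
    from coeff_unique[of "\<lambda>j. of_int (d j)" "\<lambda>j. of_int (c' j)", OF _ this] d sbc
    show "d j = c' j" by simp
  qed
  have "\<exists>j<n. j \<noteq> i \<and> c j > 0"
  proof (rule ccontr)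
    assume "\<not> ?thesis"
    hence z: "\<forall>j<n. j \<noteq> i \<longrightarrow> c j = 0"
    proof (intro allI impI)
      fix j assume nn: "\<not> (\<exists>j<n. j \<noteq> i \<and> c j > 0)" and j: "j < n" "j \<noteq> i"
      have "0 \<le> c j" "\<not> 0 < c j" using c(2) nn j by auto
      thus "c j = 0" by linarith
    qed
    have "b = (\<Sum>j<n. if j = i then of_int (c i) *\<^sub>R alpha j else 0)"
      unfolding c(1) by (rule sum.cong) (auto simp: z)
    also have "\<dots> = of_int (c i) *\<^sub>R a" using i a_def by simp
    finally have bc: "b = of_int (c i) *\<^sub>R a" .
    hence "of_int (c i) *\<^sub>R a \<in> Phi" using bP by simp
    hence "real_of_int (c i) = 1 \<or> real_of_int (c i) = -1" using red[OF a] by blast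
    hence "c i = 1" using c(2) i by auto
    hence "b = a" using bc by simp
    thus False using ne a_def by simp
  qed
  then obtain j where j: "j < n" "j \<noteq> i" "c j > 0" by blast
  have "d j > 0" using dc j c'_def by simp
  hence "\<forall>j<n. d j \<ge> 0" using d(2) j by (meson not_le)
  hence sbPos: "sb \<in> Pos" using sbP d unfolding Pos_def by blast
  have "sb \<noteq> a"
  proof
    assume "sb = a"
    hence "refl a b = a" using sb_def by simp
    hence "b = refl a a" using refl_refl[OF anz, of b] by metis
    hence "b = - a" using refl_self[OF anz] by simp
    hence "a \<in> Neg" using neg_Pos[OF b] by simp
    thus False using PN_disj alpha_Pos[OF i] a_def by blast
  qed
  thus ?thesis using sbPos sb_def a_def by simp
qed

lemma refl_image_Pos:
  assumes i: "i < n" shows "refl (alpha i) ` Pos = (Pos - {alpha i}) \<union> {- alpha i}"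
proof -
  have anz: "alpha i \<noteq> 0" using simple_in[OF i] nz by auto
  have 1: "refl (alpha i) ` (Pos - {alpha i}) = Pos - {alpha i}"
  proof
    show "refl (alpha i) ` (Pos - {alpha i}) \<subseteq> Pos - {alpha i}"
    proof
      fix y assume "y \<in> refl (alpha i) ` (Pos - {alpha i})"
      then obtain b where "b \<in> Pos" "b \<noteq> alpha i" "y = refl (alpha i) b" by blast
      thus "y \<in> Pos - {alpha i}" using refl_Pos[OF i, of b] by simp
    qed
    show "Pos - {alpha i} \<subseteq> refl (alpha i) ` (Pos - {alpha i})"
    proof
      fix b assume "b \<in> Pos - {alpha i}"
      hence "refl (alpha i) b \<in> Pos - {alpha i}" using refl_Pos[OF i, of b] by simp
      thus "b \<in> refl (alpha i) ` (Pos - {alpha i})" using refl_refl[OF anz, of b] by (metis imageI)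
    qed
  qed
  have "refl (alpha i) ` Pos = insert (refl (alpha i) (alpha i)) (refl (alpha i) ` (Pos - {alpha i}))"
    by (metis alpha_Pos[OF i] image_insert insert_Diff)
  thus ?thesis unfolding 1 refl_self[OF anz] by simp
qed


lemma act_add: "s \<in> G \<Longrightarrow> act s (a + b) = act s a + act s b"
  and act_mult: "s \<in> G \<Longrightarrow> act s (a * b) = act s a * act s b"
  and act_one: "s \<in> G \<Longrightarrow> act s 1 = 1"
  and act_id: "act id = id"
  using wa unfolding weyl_action_def by auto

lemma act_zero: "s \<in> G \<Longrightarrow> act s 0 = 0"
  using act_add[of s 0 0] by simp

lemma act_neg: "s \<in> G \<Longrightarrow> act s (- a) = - act s a"
proof -
  assume s: "s \<in> G"
  have "act s a + act s (- a) = 0" using act_add[OF s, of a "- a"] act_zero[OF s] by simp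
  thus ?thesis by (metis minus_unique)
qed

lemma act_prod: "s \<in> G \<Longrightarrow> act s (\<Prod>b\<in>A. f b) = (\<Prod>b\<in>A. act s (f b))"
  by (induction A rule: infinite_finite_induct) (auto simp: act_one act_mult)

lemma act_prod_mset: "s \<in> G \<Longrightarrow> act s (\<Prod>mu\<in>#m. f mu) = (\<Prod>mu\<in>#m. act s (f mu))"
  by (induction m) (auto simp: act_one act_mult)

lemma uinv_inv: "a * b = 1 \<Longrightarrow> a * uinv a = 1"
  unfolding uinv_def by (rule someI)

lemma uinv_unique: "a * b = (1::'a::comm_ring_1) \<Longrightarrow> uinv a = b"
proof -
  assume ab: "a * b = 1"
  have "uinv a = uinv a * (a * b)" using ab by simp
  also have "\<dots> = (a * uinv a) * b" by (simp add: algebra_simps)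
  also have "\<dots> = b" using uinv_inv[OF ab] by simp
  finally show ?thesis .
qed

lemma act_uinv: "s \<in> G \<Longrightarrow> a * b = 1 \<Longrightarrow> act s (uinv a) = uinv (act s a)"
proof -
  assume s: "s \<in> G" and ab: "a * b = 1"
  have "act s a * act s (uinv a) = 1" using act_mult[OF s, of a "uinv a", symmetric] uinv_inv[OF ab] act_one[OF s] by simp
  thus ?thesis by (rule uinv_unique[symmetric])
qed

lemma Phi_wl: "b \<in> Phi \<Longrightarrow> b \<in> weight_lattice n alpha"
  unfolding weight_lattice_def using cryst simple_in by auto

lemma x_equi: "s \<in> G \<Longrightarrow> b \<in> Phi \<Longrightarrow> act s (x b) = x (s b)"
  using ax Phi_wl unfolding admissible_x_def by auto

lemma x_unit: "b \<in> Phi \<Longrightarrow> x b * uinv (x b) = 1"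
  using ax uinv_inv unfolding admissible_x_def by metis

lemma G_neg: "s \<in> G \<Longrightarrow> s (- b) = - s b"
  using G_props linear_neg by blast

lemma G_Phi: "s \<in> G \<Longrightarrow> b \<in> Phi \<Longrightarrow> s b \<in> Phi"
  using G_props by blast

lemma theta_act: "s \<in> G \<Longrightarrow> b \<in> Phi \<Longrightarrow> act s (theta x b) = theta x (s b)"
proof -
  assume s: "s \<in> G" and b: "b \<in> Phi"
  have "act s (theta x b) = - (act s (x (- b)) * act s (uinv (x b)))"
    unfolding theta_def using act_neg[OF s] act_mult[OF s] by simp
  also have "act s (uinv (x b)) = uinv (x (s b))"
    using act_uinv[OF s x_unit[OF b]] x_equi[OF s b] by simp
  also have "act s (x (- b)) = x (- s b)"
    using x_equi[OF s neg_root[OF b]] G_neg[OF s] by simp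
  finally show ?thesis unfolding theta_def by simp
qed

lemma theta_neg: "b \<in> Phi \<Longrightarrow> theta x b * theta x (- b) = 1"
proof -
  assume b: "b \<in> Phi"
  have "theta x b * theta x (- b) = (x b * uinv (x b)) * (x (- b) * uinv (x (- b)))"
    unfolding theta_def by (simp add: algebra_simps)
  thus ?thesis using x_unit[OF b] x_unit[OF neg_root[OF b]] by simp
qed

definition "fw w = (\<Prod>b\<in>Pos \<inter> w ` Neg. theta x b)"

lemma Pos_Phi: "Pos \<subseteq> Phi" and Neg_Phi: "Neg \<subseteq> Phi"
  unfolding Pos_def Neg_def by auto

lemma fw_step:
  assumes i: "i < n" and w: "w \<in> G"
  shows "fw (refl (alpha i) \<circ> w) = theta x (alpha i) * act (refl (alpha i)) (fw w)"
proof -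
  define a where "a = alpha i"
  define s where "s = refl a"
  define u where "u = s \<circ> w"
  define M where "M = u ` Neg"
  have aP: "a \<in> Phi" using simple_in[OF i] a_def by simp
  have aPos: "a \<in> Pos" using alpha_Pos[OF i] a_def by simp
  have sG: "s \<in> G" using G_refl[OF aP] s_def by simp
  have uG: "u \<in> G" using G_comp[OF sG w] u_def by simp
  have injs: "inj s" using G_props[OF sG] by blast
  have inju: "inj u" using G_props[OF uG] by blast
  have finN: "finite (Pos \<inter> w ` Neg)" using fin Pos_Phi finite_subset by blast
  have "act s (fw w) = (\<Prod>b\<in>Pos \<inter> w ` Neg. theta x (s b))"
    unfolding fw_def act_prod[OF sG] using theta_act[OF sG] Pos_Phi by (intro prod.cong) auto
  also have "\<dots> = (\<Prod>b\<in>s ` (Pos \<inter> w ` Neg). theta x b)"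
    using prod.reindex[of s "Pos \<inter> w ` Neg" "theta x"] injs by (simp add: inj_on_def)
  also have "s ` (Pos \<inter> w ` Neg) = s ` Pos \<inter> M"
    unfolding M_def u_def image_comp[symmetric] using image_Int[OF injs] by simp
  also have "s ` Pos = (Pos - {a}) \<union> {- a}"
    using refl_image_Pos[OF i] s_def a_def by simp
  finally have eq1: "act s (fw w) = (\<Prod>b\<in>((Pos - {a}) \<union> {- a}) \<inter> M. theta x b)" .
  have fu: "fw u = (\<Prod>b\<in>Pos \<inter> M. theta x b)" unfolding fw_def M_def ..
  define Q where "Q = (Pos - {a}) \<inter> M"
  have finQ: "finite Q" unfolding Q_def using fin Pos_Phi finite_subset by blast
  have naPos: "- a \<notin> Pos" using neg_Pos[OF aPos] PN_disj by blast
  show ?thesis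
  proof (cases "a \<in> M")
    case True
    have "- a \<notin> M"
    proof
      assume "- a \<in> M"
      then obtain g2 where g2: "g2 \<in> Neg" "- a = u g2" unfolding M_def by blast
      obtain g1 where g1: "g1 \<in> Neg" "a = u g1" using True unfolding M_def by blast
      have "u (- g1) = u g2" using g1 g2 G_neg[OF uG] by simp
      hence "- g1 = g2" using inju by (simp add: inj_eq)
      thus False using neg_Neg[OF g1(1)] g2(1) PN_disj by simp
    qed
    hence e1: "((Pos - {a}) \<union> {- a}) \<inter> M = Q" unfolding Q_def by auto
    have e2: "Pos \<inter> M = insert a Q" unfolding Q_def using True aPos by blast
    have "a \<notin> Q" unfolding Q_def by blast
    thus ?thesis using eq1 fu e1 e2 finQ unfolding u_def s_def a_def by simp
  next
    case False
    obtain g where g: "g \<in> Phi" "a = u g" using aP G_props[OF uG] by blast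
    have "g \<notin> Neg" using g False unfolding M_def by blast
    hence "g \<in> Pos" using g PN_union by blast
    hence "- g \<in> Neg" by (rule neg_Pos)
    hence naM: "- a \<in> M" unfolding M_def using g G_neg[OF uG] by (metis image_eqI)
    have e1: "((Pos - {a}) \<union> {- a}) \<inter> M = insert (- a) Q" unfolding Q_def using naM by blast
    have e2: "Pos \<inter> M = Q" unfolding Q_def using False by blast
    have nq: "- a \<notin> Q" unfolding Q_def using naPos by blast
    have "theta x a * act s (fw w) = (theta x a * theta x (- a)) * prod (theta x) Q"
      using eq1 e1 nq finQ by (simp add: mult.assoc)
    also have "\<dots> = fw u" using theta_neg[OF aP] fu e2 by simp
    finally show ?thesis unfolding u_def s_def a_def by simp
  qed
qed


lemma word_elt_Nil: "word_elt alpha [] = id" unfolding word_elt_def by simp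
lemma word_elt_Cons: "word_elt alpha (i # I) = refl (alpha i) \<circ> word_elt alpha I"
  unfolding word_elt_def by simp

lemma word_elt_G: "set I \<subseteq> {..<n} \<Longrightarrow> word_elt alpha I \<in> G"
  by (induction I) (auto simp: word_elt_Nil word_elt_Cons weyl_group.id_in intro!: weyl_group.refl_in simple_in)

lemma beta_0: "beta alpha (i # I) 0 = alpha i"
  unfolding beta_def by (simp add: word_elt_Nil)

lemma beta_Suc: "beta alpha (i # I) (Suc k) = refl (alpha i) (beta alpha I k)"
  unfolding beta_def by (simp add: word_elt_Cons)

lemma beta_Phi: "set I \<subseteq> {..<n} \<Longrightarrow> k < length I \<Longrightarrow> beta alpha I k \<in> Phi"
proof -
  assume I: "set I \<subseteq> {..<n}" and k: "k < length I"
  have "set (take k I) \<subseteq> {..<n}" using set_take_subset I by (rule order.trans)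
  hence wG: "word_elt alpha (take k I) \<in> G" by (rule word_elt_G)
  have "I ! k \<in> set I" using k by (rule nth_mem)
  hence "I ! k < n" using I by auto
  hence "alpha (I ! k) \<in> Phi" by (rule simple_in)
  thus ?thesis unfolding beta_def by (rule G_Phi[OF wG])
qed

lemma theta_word_fw: "set I \<subseteq> {..<n} \<Longrightarrow> theta_word x alpha I = fw (word_elt alpha I)"
proof (induction I)
  case Nil
  have "Pos \<inter> Neg = {}" using PN_disj by blast
  thus ?case unfolding theta_word_def fw_def word_elt_Nil by simp
next
  case (Cons i I)
  have i: "i < n" and I: "set I \<subseteq> {..<n}" using Cons.prems by auto
  define s where "s = refl (alpha i)"
  have sG: "s \<in> G" using G_refl[OF simple_in[OF i]] s_def by simp
  have e0: "theta_word x alpha (i # I) = theta x (beta alpha (i # I) 0) * (\<Prod>k<length I. theta x (beta alpha (i # I) (Suc k)))"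
    unfolding theta_word_def length_Cons by (rule prod.lessThan_Suc_shift)
  have e1: "(\<Prod>k<length I. theta x (beta alpha (i # I) (Suc k))) = act s (theta_word x alpha I)"
    unfolding theta_word_def act_prod[OF sG] beta_Suc s_def[symmetric]
    by (rule prod.cong[OF refl]) (rule theta_act[OF sG beta_Phi[OF I], symmetric], simp)
  have "theta_word x alpha (i # I) = theta x (alpha i) * act s (fw (word_elt alpha I))"
    unfolding e0 e1 beta_0 Cons.IH[OF I] ..
  also have "\<dots> = fw (word_elt alpha (i # I))"
    unfolding word_elt_Cons s_def by (rule fw_step[OF i word_elt_G[OF I], symmetric])
  finally show ?case .
qed

definition K :: "('v \<Rightarrow> 'v) \<Rightarrow> ('v, 'q) qw \<Rightarrow> ('v, 'q) qw" where
  "K s g u = (\<Sum>v\<in>G. if s \<circ> v = u then act s (g v) else 0)"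

lemma qw_lin: "qw_mult Phi act (\<lambda>w. f1 w + f2 w) g u = qw_mult Phi act f1 g u + qw_mult Phi act f2 g u"
  unfolding qw_mult_def sum.distrib[symmetric] by (intro sum.cong refl) (auto simp: distrib_right)

lemma qw_delta: "w0 \<in> G \<Longrightarrow> qw_mult Phi act (\<lambda>w. c * delta w0 w) g u = c * K w0 g u"
proof -
  assume w0: "w0 \<in> G"
  have "qw_mult Phi act (\<lambda>w. c * delta w0 w) g u = (\<Sum>w\<in>G. if w = w0 then c * K w0 g u else 0)"
    unfolding qw_mult_def
  proof (rule sum.cong[OF refl])
    fix w assume "w \<in> G"
    show "(\<Sum>v\<in>G. if w \<circ> v = u then c * delta w0 w * act w (g v) else 0) = (if w = w0 then c * K w0 g u else 0)"
    proof (cases "w = w0")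
      case True thus ?thesis unfolding K_def delta_def sum_distrib_left by (auto intro!: sum.cong)
    next
      case False
      have "\<And>v. (if w \<circ> v = u then c * delta w0 w * act w (g v) else 0) = 0"
        using False unfolding delta_def by simp
      thus ?thesis using False by simp
    qed
  qed
  also have "\<dots> = c * K w0 g u" using w0 G_finite by simp
  finally show ?thesis .
qed

lemma qw_delta1: "w0 \<in> G \<Longrightarrow> qw_mult Phi act (delta w0) g u = K w0 g u"
  using qw_delta[of w0 1 g u] by simp

lemma K_scal: "s \<in> G \<Longrightarrow> K s (\<lambda>u. c * g u) u = act s c * K s g u"
  unfolding K_def sum_distrib_left by (intro sum.cong refl) (auto simp: act_mult)

lemma K_add: "s \<in> G \<Longrightarrow> K s (\<lambda>u. g1 u + g2 u) u = K s g1 u + K s g2 u"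
  unfolding K_def sum.distrib[symmetric] by (intro sum.cong refl) (auto simp: act_add)

lemma K_zero: "s \<in> G \<Longrightarrow> K s (\<lambda>u. 0) u = 0"
proof -
  assume s: "s \<in> G"
  show ?thesis unfolding K_def act_zero[OF s] by simp
qed

lemma K_delta: "s \<in> G \<Longrightarrow> w \<in> G \<Longrightarrow> K s (delta w) u = delta (s \<circ> w) u"
proof -
  assume s: "s \<in> G" and w: "w \<in> G"
  have "K s (delta w) u = (\<Sum>v\<in>G. if v = w then (if s \<circ> w = u then 1 else 0) else 0)"
    unfolding K_def delta_def by (intro sum.cong refl) (auto simp: act_one[OF s] act_zero[OF s])
  also have "\<dots> = delta (s \<circ> w) u" using w G_finite by (auto simp: delta_def)
  finally show ?thesis .
qed

lemma K_sum_list: "s \<in> G \<Longrightarrow> K s (\<lambda>u. \<Sum>p\<leftarrow>A. f p u) u = (\<Sum>p\<leftarrow>A. K s (f p) u)"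
proof (induction A)
  case Nil thus ?case using K_zero by simp
next
  case (Cons p A)
  thus ?case using K_add[OF Cons.prems, of "f p" "\<lambda>u. \<Sum>p\<leftarrow>A. f p u" u] by simp
qed


definition msmap :: "('v \<Rightarrow> 'v) \<Rightarrow> ('v, 'q) qwl \<Rightarrow> ('v, 'q) qwl" where
  "msmap s A = map (\<lambda>p. (image_mset s (fst p), snd p)) A"

lemma msmap_tmult: "msmap s (tmult Phi act A B) = tmult Phi act (msmap s A) (msmap s B)"
  unfolding msmap_def tmult_def by (simp add: map_concat comp_def)

lemma tprod_msmap: "tprod Phi act (map (msmap s) Ls) = msmap s (tprod Phi act Ls)"
proof (induction Ls)
  case Nil thus ?case unfolding tprod_def msmap_def by simp
next
  case (Cons L Ls)
  have "tprod Phi act (map (msmap s) (L # Ls)) = tmult Phi act (msmap s L) (tprod Phi act (map (msmap s) Ls))"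
    unfolding tprod_def by simp
  also have "\<dots> = msmap s (tmult Phi act L (tprod Phi act Ls))" using Cons.IH msmap_tmult by simp
  also have "\<dots> = msmap s (tprod Phi act (L # Ls))" unfolding tprod_def by simp
  finally show ?case .
qed

lemma hX_refl: "hX alpha x j (refl a l) = msmap (refl a) (hX alpha x j l)"
  unfolding hX_def msmap_def by (simp add: refl_neg)

lemma hY_refl: "hY alpha x j (refl a l) = msmap (refl a) (hY alpha x j l)"
  unfolding hY_def msmap_def by simp

lemma root_cons:
  assumes h: "\<And>j l. h j (refl (alpha i) l) = msmap (refl (alpha i)) (h j l)"
  shows "tprod Phi act (map (\<lambda>k. h ((i # I) ! k) (beta alpha (i # I) k)) [0..<length (i # I)])
    = tmult Phi act (h i (alpha i)) (msmap (refl (alpha i)) (tprod Phi act (map (\<lambda>k. h (I ! k) (beta alpha I k)) [0..<length I])))"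
proof -
  have "[0..<length (i # I)] = 0 # map Suc [0..<length I]"
    by (simp add: map_Suc_upt upt_conv_Cons del: upt_Suc)
  hence "map (\<lambda>k. h ((i # I) ! k) (beta alpha (i # I) k)) [0..<length (i # I)]
      = h i (alpha i) # map (msmap (refl (alpha i))) (map (\<lambda>k. h (I ! k) (beta alpha I k)) [0..<length I])"
    by (simp add: beta_0 beta_Suc h del: upt_Suc)
  moreover have "\<And>a Ls. tprod Phi act (a # Ls) = tmult Phi act a (tprod Phi act Ls)"
    unfolding tprod_def by simp
  ultimately show ?thesis by (simp only: tprod_msmap)
qed

lemma ev_tmult2: "ev x (tmult Phi act [a1, a2] B) u =
  (\<Sum>b\<leftarrow>B. (\<Prod>mu\<in>#fst a1 + fst b. x (- mu)) * qw_mult Phi act (snd a1) (snd b) u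
          + (\<Prod>mu\<in>#fst a2 + fst b. x (- mu)) * qw_mult Phi act (snd a2) (snd b) u)"
  unfolding ev_def tmult_def by (simp add: sum_list_addf comp_def)

lemma sum_list_map_cong: "(\<And>p. p \<in> set A \<Longrightarrow> f p = g p) \<Longrightarrow> sum_list (map f A) = sum_list (map g A)"
  by (metis map_cong)

lemma P_msmap:
  assumes s: "s \<in> G" and m: "set_mset m \<subseteq> Phi"
  shows "(\<Prod>mu\<in>#image_mset s m. x (- mu)) = act s (\<Prod>mu\<in>#m. x (- mu))"
proof -
  have "(\<Prod>mu\<in>#image_mset s m. x (- mu)) = (\<Prod>mu\<in>#m. x (- s mu))"
    by (simp add: image_mset.compositionality comp_def)
  also have "\<dots> = (\<Prod>mu\<in>#m. act s (x (- mu)))"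
  proof (rule arg_cong[where f=prod_mset], rule image_mset_cong)
    fix mu assume "mu \<in># m"
    hence "mu \<in> Phi" using m by auto
    thus "x (- s mu) = act s (x (- mu))" using x_equi[OF s neg_root] G_neg[OF s] by simp
  qed
  also have "\<dots> = act s (\<Prod>mu\<in>#m. x (- mu))" by (rule act_prod_mset[OF s, symmetric])
  finally show ?thesis .
qed

lemma demX_eq: "demX alpha x i = (\<lambda>w. uinv (x (alpha i)) * delta (refl (alpha i)) w + (- uinv (x (alpha i))) * delta id w)"
  unfolding demX_def scal_def by (auto simp: algebra_simps)

lemma ppY_eq: "(\<lambda>u. - ppY alpha x i u) = (\<lambda>w. (- uinv (x (- alpha i))) * delta id w + (- uinv (x (alpha i))) * delta (refl (alpha i)) w)"
  unfolding ppY_def by (auto simp: algebra_simps)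

lemma pair_X:
  assumes i: "i < n" and m: "set_mset m \<subseteq> Phi"
  defines "s \<equiv> refl (alpha i)"
  shows "(\<Prod>mu\<in>#{#} + image_mset s m. x (- mu)) * qw_mult Phi act (delta id) b u
       + (\<Prod>mu\<in>#{#- alpha i#} + image_mset s m. x (- mu)) * qw_mult Phi act (demX alpha x i) b u
       = K s (\<lambda>u. (\<Prod>mu\<in>#m. x (- mu)) * b u) u"
proof -
  have aP: "alpha i \<in> Phi" using simple_in[OF i] .
  have sG: "s \<in> G" using G_refl[OF aP] s_def by simp
  define P where "P = (\<Prod>mu\<in>#m. x (- mu))"
  define e where "e = x (alpha i) * uinv (x (alpha i))"
  have e: "e = 1" using x_unit[OF aP] e_def by simp
  have P1: "(\<Prod>mu\<in>#{#} + image_mset s m. x (- mu)) = act s P" using P_msmap[OF sG m] P_def by simp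
  have P2: "(\<Prod>mu\<in>#{#- alpha i#} + image_mset s m. x (- mu)) = x (alpha i) * act s P"
    using P_msmap[OF sG m] P_def by simp
  have Q1: "qw_mult Phi act (delta id) b u = K id b u" using qw_delta1[OF weyl_group.id_in] .
  have Q2: "qw_mult Phi act (demX alpha x i) b u = uinv (x (alpha i)) * K s b u + (- uinv (x (alpha i))) * K id b u"
    unfolding demX_eq qw_lin s_def qw_delta[OF G_refl[OF aP]] qw_delta[OF weyl_group.id_in] ..
  have R: "K s (\<lambda>u. P * b u) u = act s P * K s b u" using K_scal[OF sG] .
  have "act s P * K id b u + x (alpha i) * act s P * (uinv (x (alpha i)) * K s b u + (- uinv (x (alpha i))) * K id b u)
      = act s P * K id b u + e * (act s P * K s b u) - e * (act s P * K id b u)"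
    unfolding e_def by (simp add: algebra_simps)
  also have "\<dots> = act s P * K s b u" using e by simp
  finally show ?thesis unfolding P1 P2 Q1 Q2 R P_def[symmetric] .
qed

lemma pair_Y:
  assumes i: "i < n" and m: "set_mset m \<subseteq> Phi"
  defines "s \<equiv> refl (alpha i)"
  shows "(\<Prod>mu\<in>#{#} + image_mset s m. x (- mu)) * qw_mult Phi act (delta id) b u
       + (\<Prod>mu\<in>#{#alpha i#} + image_mset s m. x (- mu)) * qw_mult Phi act (\<lambda>u. - ppY alpha x i u) b u
       = theta x (alpha i) * K s (\<lambda>u. (\<Prod>mu\<in>#m. x (- mu)) * b u) u"
proof -
  have aP: "alpha i \<in> Phi" using simple_in[OF i] .
  have sG: "s \<in> G" using G_refl[OF aP] s_def by simp
  define P where "P = (\<Prod>mu\<in>#m. x (- mu))"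
  define e where "e = x (- alpha i) * uinv (x (- alpha i))"
  have e: "e = 1" using x_unit[OF neg_root[OF aP]] e_def by simp
  have P1: "(\<Prod>mu\<in>#{#} + image_mset s m. x (- mu)) = act s P" using P_msmap[OF sG m] P_def by simp
  have P2: "(\<Prod>mu\<in>#{#alpha i#} + image_mset s m. x (- mu)) = x (- alpha i) * act s P"
    using P_msmap[OF sG m] P_def by simp
  have Q1: "qw_mult Phi act (delta id) b u = K id b u" using qw_delta1[OF weyl_group.id_in] .
  have Q2: "qw_mult Phi act (\<lambda>u. - ppY alpha x i u) b u = (- uinv (x (- alpha i))) * K id b u + (- uinv (x (alpha i))) * K s b u"
    unfolding ppY_eq qw_lin s_def qw_delta[OF G_refl[OF aP]] qw_delta[OF weyl_group.id_in] ..
  have R: "K s (\<lambda>u. P * b u) u = act s P * K s b u" using K_scal[OF sG] .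
  have "act s P * K id b u + x (- alpha i) * act s P * ((- uinv (x (- alpha i))) * K id b u + (- uinv (x (alpha i))) * K s b u)
      = act s P * K id b u - e * (act s P * K id b u) + theta x (alpha i) * (act s P * K s b u)"
    unfolding e_def theta_def by (simp add: algebra_simps)
  also have "\<dots> = theta x (alpha i) * (act s P * K s b u)" using e by simp
  finally show ?thesis unfolding P1 P2 Q1 Q2 R P_def[symmetric] .
qed


lemma ev_eq: "ev x A = (\<lambda>u. \<Sum>p\<leftarrow>A. (\<Prod>mu\<in>#fst p. x (- mu)) * snd p u)"
  unfolding ev_def ..

lemma ev_step_X:
  assumes i: "i < n" and A: "\<forall>p\<in>set A. set_mset (fst p) \<subseteq> Phi"
  shows "ev x (tmult Phi act (hX alpha x i (alpha i)) (msmap (refl (alpha i)) A)) = (\<lambda>u. K (refl (alpha i)) (ev x A) u)"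
proof
  fix u
  define s where "s = refl (alpha i)"
  have sG: "s \<in> G" using G_refl[OF simple_in[OF i]] s_def by simp
  have "ev x (tmult Phi act (hX alpha x i (alpha i)) (msmap s A)) u
     = (\<Sum>p\<leftarrow>A. (\<Prod>mu\<in>#{#} + image_mset s (fst p). x (- mu)) * qw_mult Phi act (delta id) (snd p) u
          + (\<Prod>mu\<in>#{#- alpha i#} + image_mset s (fst p). x (- mu)) * qw_mult Phi act (demX alpha x i) (snd p) u)"
    unfolding hX_def ev_tmult2 msmap_def by (simp add: comp_def del: add_mset_add_single)
  also have "\<dots> = (\<Sum>p\<leftarrow>A. K s (\<lambda>u. (\<Prod>mu\<in>#fst p. x (- mu)) * snd p u) u)"
    by (rule sum_list_map_cong) (use pair_X[OF i] A s_def in auto)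
  also have "\<dots> = K s (ev x A) u"
    unfolding ev_eq by (rule K_sum_list[OF sG, symmetric])
  finally show "ev x (tmult Phi act (hX alpha x i (alpha i)) (msmap (refl (alpha i)) A)) u = K (refl (alpha i)) (ev x A) u"
    unfolding s_def .
qed

lemma ev_step_Y:
  assumes i: "i < n" and A: "\<forall>p\<in>set A. set_mset (fst p) \<subseteq> Phi"
  shows "ev x (tmult Phi act (hY alpha x i (alpha i)) (msmap (refl (alpha i)) A)) = (\<lambda>u. theta x (alpha i) * K (refl (alpha i)) (ev x A) u)"
proof
  fix u
  define s where "s = refl (alpha i)"
  have sG: "s \<in> G" using G_refl[OF simple_in[OF i]] s_def by simp
  have "ev x (tmult Phi act (hY alpha x i (alpha i)) (msmap s A)) u
     = (\<Sum>p\<leftarrow>A. (\<Prod>mu\<in>#{#} + image_mset s (fst p). x (- mu)) * qw_mult Phi act (delta id) (snd p) u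
          + (\<Prod>mu\<in>#{#alpha i#} + image_mset s (fst p). x (- mu)) * qw_mult Phi act (\<lambda>u. - ppY alpha x i u) (snd p) u)"
    unfolding hY_def ev_tmult2 msmap_def by (simp add: comp_def del: add_mset_add_single)
  also have "\<dots> = (\<Sum>p\<leftarrow>A. theta x (alpha i) * K s (\<lambda>u. (\<Prod>mu\<in>#fst p. x (- mu)) * snd p u) u)"
    by (rule sum_list_map_cong) (use pair_Y[OF i] A s_def in auto)
  also have "\<dots> = theta x (alpha i) * K s (ev x A) u"
    unfolding ev_eq K_sum_list[OF sG] by (simp add: sum_list_const_mult)
  finally show "ev x (tmult Phi act (hY alpha x i (alpha i)) (msmap (refl (alpha i)) A)) u = theta x (alpha i) * K (refl (alpha i)) (ev x A) u"
    unfolding s_def .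
qed

lemma tmult_set:
  assumes "p \<in> set (tmult Phi act [a1, a2] B)"
  shows "\<exists>b\<in>set B. fst p = fst a1 + fst b \<or> fst p = fst a2 + fst b"
proof -
  have "set (tmult Phi act [a1, a2] B) = (\<lambda>b. (fst a1 + fst b, qw_mult Phi act (snd a1) (snd b))) ` set B
     \<union> (\<lambda>b. (fst a2 + fst b, qw_mult Phi act (snd a2) (snd b))) ` set B"
    unfolding tmult_def by simp
  then obtain b where "b \<in> set B" "p = (fst a1 + fst b, qw_mult Phi act (snd a1) (snd b))
     \<or> p = (fst a2 + fst b, qw_mult Phi act (snd a2) (snd b))" using assms by blast
  thus ?thesis by (metis fst_conv)
qed

lemma main_X: "set I \<subseteq> {..<n} \<Longrightarrow> (\<forall>p\<in>set (root_polyX Phi alpha act x I). set_mset (fst p) \<subseteq> Phi)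
   \<and> ev x (root_polyX Phi alpha act x I) = delta (word_elt alpha I)"
proof (induction I)
  case Nil
  show ?case unfolding root_polyX_def tprod_def ev_def word_elt_Nil by (simp add: id_def)
next
  case (Cons i I)
  have i: "i < n" and I: "set I \<subseteq> {..<n}" using Cons.prems by auto
  define s where "s = refl (alpha i)"
  have aP: "alpha i \<in> Phi" using simple_in[OF i] .
  have sG: "s \<in> G" using G_refl[OF aP] s_def by simp
  have eq: "root_polyX Phi alpha act x (i # I) = tmult Phi act (hX alpha x i (alpha i)) (msmap s (root_polyX Phi alpha act x I))"
    unfolding root_polyX_def s_def by (rule root_cons) (rule hX_refl)
  note IH = Cons.IH[OF I]
  have "\<forall>p\<in>set (root_polyX Phi alpha act x (i # I)). set_mset (fst p) \<subseteq> Phi"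
  proof
    fix p assume "p \<in> set (root_polyX Phi alpha act x (i # I))"
    hence "p \<in> set (tmult Phi act [({#}, delta id), ({#- alpha i#}, demX alpha x i)] (msmap s (root_polyX Phi alpha act x I)))"
      unfolding eq hX_def .
    then obtain b where b: "b \<in> set (msmap s (root_polyX Phi alpha act x I))"
      and fp: "fst p = fst b \<or> fst p = {#- alpha i#} + fst b" using tmult_set by fastforce
    obtain q where q: "q \<in> set (root_polyX Phi alpha act x I)" "b = (image_mset s (fst q), snd q)"
      using b unfolding msmap_def by auto
    have "set_mset (fst b) \<subseteq> Phi" using q IH G_Phi[OF sG] by auto
    thus "set_mset (fst p) \<subseteq> Phi" using fp neg_root[OF aP] by auto
  qed
  moreover have "ev x (root_polyX Phi alpha act x (i # I)) = delta (word_elt alpha (i # I))"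
  proof
    fix u
    have "ev x (root_polyX Phi alpha act x (i # I)) u = K s (ev x (root_polyX Phi alpha act x I)) u"
      unfolding eq s_def using ev_step_X[OF i] IH by simp
    also have "\<dots> = delta (s \<circ> word_elt alpha I) u" using IH K_delta[OF sG word_elt_G[OF I]] by simp
    finally show "ev x (root_polyX Phi alpha act x (i # I)) u = delta (word_elt alpha (i # I)) u"
      unfolding word_elt_Cons s_def .
  qed
  ultimately show ?case ..
qed

lemma main_Y: "set I \<subseteq> {..<n} \<Longrightarrow> (\<forall>p\<in>set (root_polyY Phi alpha act x I). set_mset (fst p) \<subseteq> Phi)
   \<and> ev x (root_polyY Phi alpha act x I) = scal (theta_word x alpha I) (delta (word_elt alpha I))"
proof (induction I)
  case Nil
  show ?case unfolding root_polyY_def tprod_def ev_def word_elt_Nil theta_word_def scal_def by (simp add: id_def)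
next
  case (Cons i I)
  have i: "i < n" and I: "set I \<subseteq> {..<n}" using Cons.prems by auto
  define s where "s = refl (alpha i)"
  have aP: "alpha i \<in> Phi" using simple_in[OF i] .
  have sG: "s \<in> G" using G_refl[OF aP] s_def by simp
  have eq: "root_polyY Phi alpha act x (i # I) = tmult Phi act (hY alpha x i (alpha i)) (msmap s (root_polyY Phi alpha act x I))"
    unfolding root_polyY_def s_def by (rule root_cons) (rule hY_refl)
  note IH = Cons.IH[OF I]
  have "\<forall>p\<in>set (root_polyY Phi alpha act x (i # I)). set_mset (fst p) \<subseteq> Phi"
  proof
    fix p assume "p \<in> set (root_polyY Phi alpha act x (i # I))"
    hence "p \<in> set (tmult Phi act [({#}, delta id), ({#alpha i#}, (\<lambda>u. - ppY alpha x i u))] (msmap s (root_polyY Phi alpha act x I)))"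
      unfolding eq hY_def .
    then obtain b where b: "b \<in> set (msmap s (root_polyY Phi alpha act x I))"
      and fp: "fst p = fst b \<or> fst p = {#alpha i#} + fst b" using tmult_set by fastforce
    obtain q where q: "q \<in> set (root_polyY Phi alpha act x I)" "b = (image_mset s (fst q), snd q)"
      using b unfolding msmap_def by auto
    have "set_mset (fst b) \<subseteq> Phi" using q IH G_Phi[OF sG] by auto
    thus "set_mset (fst p) \<subseteq> Phi" using fp aP by auto
  qed
  moreover have "ev x (root_polyY Phi alpha act x (i # I)) = scal (theta_word x alpha (i # I)) (delta (word_elt alpha (i # I)))"
  proof
    fix u
    have tw: "theta_word x alpha (i # I) = theta x (alpha i) * act s (theta_word x alpha I)"
      using theta_word_fw[OF Cons.prems] theta_word_fw[OF I] fw_step[OF i word_elt_G[OF I]]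
      unfolding word_elt_Cons s_def by simp
    have "ev x (root_polyY Phi alpha act x (i # I)) u = theta x (alpha i) * K s (ev x (root_polyY Phi alpha act x I)) u"
      unfolding eq s_def using ev_step_Y[OF i] IH by simp
    also have "\<dots> = theta x (alpha i) * K s (\<lambda>u. theta_word x alpha I * delta (word_elt alpha I) u) u"
      using IH unfolding scal_def by simp
    also have "\<dots> = theta x (alpha i) * (act s (theta_word x alpha I) * delta (s \<circ> word_elt alpha I) u)"
      unfolding K_scal[OF sG] K_delta[OF sG word_elt_G[OF I]] ..
    finally show "ev x (root_polyY Phi alpha act x (i # I)) u = scal (theta_word x alpha (i # I)) (delta (word_elt alpha (i # I))) u"
      unfolding scal_def tw word_elt_Cons s_def by (simp add: mult.assoc)
  qed
  ultimately show ?case ..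
qed

end

theorem lemma3p2:
  fixes Phi :: "'v::euclidean_space set" and n :: nat and alpha :: "nat \<Rightarrow> 'v"
    and act :: "('v \<Rightarrow> 'v) \<Rightarrow> 'q::comm_ring_1 \<Rightarrow> 'q" and x :: "'v \<Rightarrow> 'q"
    and w :: "'v \<Rightarrow> 'v" and I :: "nat list"
  assumes "root_system Phi" and "simple_roots Phi n alpha"
    and "weyl_action Phi act" and "admissible_x Phi n alpha act x"
    and "w \<in> weyl_group Phi" and "reduced_word n alpha w I"
  shows "ev x (root_polyX Phi alpha act x I) = delta w
    \<and> ev x (root_polyY Phi alpha act x I) = scal (theta_word x alpha I) (delta w)
    \<and> (\<forall>J. reduced_word n alpha w J \<longrightarrow> theta_word x alpha J = theta_word x alpha I)"
proof -
  interpret RS Phi n alpha act x by unfold_locales (rule assms)+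
  have I: "set I \<subseteq> {..<n}" and w: "word_elt alpha I = w"
    using assms(6) unfolding reduced_word_def by auto
  have 3: "\<forall>J. reduced_word n alpha w J \<longrightarrow> theta_word x alpha J = theta_word x alpha I"
  proof (intro allI impI)
    fix J assume "reduced_word n alpha w J"
    hence J: "set J \<subseteq> {..<n}" and wJ: "word_elt alpha J = w" unfolding reduced_word_def by auto
    show "theta_word x alpha J = theta_word x alpha I"
      using theta_word_fw[OF J] theta_word_fw[OF I] w wJ by simp
  qed
  show ?thesis using main_X[OF I] main_Y[OF I] w 3 by simp
qed

end
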